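(* Let $L\in\mathbb N$, $L\ge 2$, ${\bf A}\in\mathbb R^{M\times N}$, ${\bf b}\in\mathbb R^M$, $\tilde\eta>0$. Let ${\bf x}$ follow $\partial_t{\bf x}=-\nabla\mathcal L({\bf x})$ with ${\bf x}(0)>0$, and let $(r,{\bf u})$ follow the weight-normalized gradient flow with $(\eta_r,\eta_{\bf u})=(\tilde\eta,1)$, $r_0>0$, ${\bf u}_0>0$, $\|{\bf u}_0\|_2=1$, and ${\bf x}_{wn}=\frac{r}{\|{\bf u}\|_2}{\bf u}$; suppose $\lim_{t\to\infty}r(t)$ exists and is nonzero. Assume there exists ${\bf v}\in\mathbb R^N$ with ${\bf v}>0$ and ${\bf A}{\bf v}=0$, and that ${\bf x}(t)$ and ${\bf x}_{wn}(t)$ are bounded above uniformly in $t\ge0$. Then every entry of ${\bf x}(t)$ and of ${\bf x}_{wn}(t)$ is bounded away from zero uniformly in $t\ge0$.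
   Context: $\odot$ denotes entrywise product/power; vector inequalities are entrywise. Loss: $\mathcal L({\bf x})=\frac{1}{2L}\|{\bf A}{\bf x}^{\odot L}-{\bf b}\|_2^2$. Weight-normalized loss $\tilde{\mathcal L}(r,{\bf u})=\mathcal L\big(\frac{r}{\|{\bf u}\|_2}{\bf u}\big)$. Weight-normalized gradient flow: $\partial_t r=-\eta_r\nabla_r\tilde{\mathcal L}(r,{\bf u})$, $\partial_t{\bf u}=-\eta_{\bf u}\nabla_{\bf u}\tilde{\mathcal L}(r,{\bf u})$, $r(0)=r_0$, ${\bf u}(0)={\bf u}_0$. *)

theory Defs
  imports "HOL-Analysis.Analysis"
begin

definition lossL :: "nat \<Rightarrow> real^'n^'m \<Rightarrow> real^'m \<Rightarrow> real^'n \<Rightarrow> real" where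
  "lossL L A b x = (1 / (2 * real L)) * (norm (A *v (\<chi> i. (x $ i) ^ L) - b))\<^sup>2"

definition lossWN :: "nat \<Rightarrow> real^'n^'m \<Rightarrow> real^'m \<Rightarrow> real \<Rightarrow> real^'n \<Rightarrow> real" where
  "lossWN L A b r u = lossL L A b ((r / norm u) *\<^sub>R u)"

text \<open>x solves dx/dt = - grad L(x) on [0,oo); the gradient is the Riesz representer
  of the Frechet derivative.\<close>
definition grad_flow :: "nat \<Rightarrow> real^'n^'m \<Rightarrow> real^'m \<Rightarrow> (real \<Rightarrow> real^'n) \<Rightarrow> bool" where
  "grad_flow L A b x \<longleftrightarrow>
     (\<forall>t\<ge>0. \<exists>g. (lossL L A b has_derivative (\<lambda>h. g \<bullet> h)) (at (x t)) \<and>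
                 (x has_vector_derivative (- g)) (at t within {0..}))"

definition wn_flow :: "nat \<Rightarrow> real^'n^'m \<Rightarrow> real^'m \<Rightarrow> real \<Rightarrow> real \<Rightarrow>
    (real \<Rightarrow> real) \<Rightarrow> (real \<Rightarrow> real^'n) \<Rightarrow> bool" where
  "wn_flow L A b eta_r eta_u r u \<longleftrightarrow>
     (\<forall>t\<ge>0. \<exists>gr gu.
        ((\<lambda>s. lossWN L A b s (u t)) has_real_derivative gr) (at (r t)) \<and>
        ((\<lambda>w. lossWN L A b (r t) w) has_derivative (\<lambda>h. gu \<bullet> h)) (at (u t)) \<and>
        (r has_real_derivative (- eta_r * gr)) (at t within {0..}) \<and>
        (u has_vector_derivative (- (eta_u *\<^sub>R gu))) (at t within {0..}))"

end

theory Submission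
  imports Defs
begin


lemma vd_comp:
  assumes "(f has_vector_derivative f') F"
  shows "((\<lambda>t. f t $ i) has_real_derivative f' $ i) F"
proof -
  have "((\<lambda>t. f t $ i) has_derivative (\<lambda>h. (h *\<^sub>R f') $ i)) F"
    using bounded_linear.has_derivative[OF bounded_linear_vec_nth assms[unfolded has_vector_derivative_def]] .
  then show ?thesis by (simp add: has_field_derivative_def mult_commute_abs)
qed

lemma loss_expand:
  "lossL L A b y = (1/(2*real L)) * (\<Sum>j\<in>UNIV. ((\<Sum>i\<in>UNIV. A$j$i * (y$i)^L) - b$j)^2)"
  unfolding lossL_def power2_norm_eq_inner inner_vec_def matrix_vector_mult_def
  by (simp add: power2_eq_square)

lemma E_deriv:
  assumes "\<And>i. ((\<lambda>s. Y s $ i) has_real_derivative D i) (at s0)"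
  shows "((\<lambda>s. lossL L A b (Y s)) has_real_derivative
     (1/(2*real L)) * (\<Sum>j\<in>UNIV. 2*((\<Sum>i\<in>UNIV. A$j$i*(Y s0$i)^L) - b$j) *
          (\<Sum>i\<in>UNIV. A$j$i * (real L * (Y s0 $i)^(L-1) * D i)))) (at s0)"
  unfolding loss_expand
  apply (rule derivative_eq_intros refl assms | simp)+
  apply (simp add: algebra_simps)
  done




lemma vd_comp':
  assumes "(f has_vector_derivative f') F"
  shows "((\<lambda>t. f t $ i) has_real_derivative f' $ i) F"
proof -
  have "((\<lambda>t. f t $ i) has_derivative (\<lambda>h. (h *\<^sub>R f') $ i)) F"
    using bounded_linear.has_derivative[OF bounded_linear_vec_nth assms[unfolded has_vector_derivative_def]] .
  then show ?thesis by (simp add: has_field_derivative_def mult_commute_abs)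
qed

lemma line_deriv:
  assumes "(F has_derivative (\<lambda>h. g \<bullet> h)) (at y)"
  shows "((\<lambda>s. F (y + s *\<^sub>R h)) has_real_derivative g \<bullet> h) (at 0)"
proof -
  have l: "((\<lambda>s::real. y + s *\<^sub>R h) has_derivative (\<lambda>s. s *\<^sub>R h)) (at 0)"
    by (rule derivative_eq_intros refl | simp)+
  have "((F \<circ> (\<lambda>s::real. y + s *\<^sub>R h)) has_derivative ((\<lambda>h. g \<bullet> h) \<circ> (\<lambda>s. s *\<^sub>R h))) (at 0)"
    by (rule diff_chain_at[OF l]) (simp add: assms)
  then show ?thesis by (simp add: has_field_derivative_def o_def mult_commute_abs)
qed

lemma X1:
  assumes pos: "\<forall>i. y$i > 0" and Av: "A *v v = 0" and L: "L \<ge> 1"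
    and d: "(lossL L A b has_derivative (\<lambda>h. g \<bullet> h)) (at y)"
  shows "g \<bullet> (\<chi> i. v$i / (y$i)^(L-1)) = 0"
proof -
  define h where "h = (\<chi> i. v$i / (y$i)^(L-1))"
  have d1: "((\<lambda>s. lossL L A b (y + s *\<^sub>R h)) has_real_derivative g \<bullet> h) (at 0)"
    by (rule line_deriv[OF d])
  have "((\<lambda>s. lossL L A b (y + s *\<^sub>R h)) has_real_derivative
     (1/(2*real L)) * (\<Sum>j\<in>UNIV. 2*((\<Sum>i\<in>UNIV. A$j$i*((y + 0 *\<^sub>R h)$i)^L) - b$j) *
          (\<Sum>i\<in>UNIV. A$j$i * (real L * ((y + 0 *\<^sub>R h) $i)^(L-1) * h$i)))) (at 0)"
    by (rule E_deriv) (rule derivative_eq_intros refl | simp)+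
  moreover have "\<And>j. (\<Sum>i\<in>UNIV. A$j$i * (real L * ((y + 0 *\<^sub>R h) $i)^(L-1) * h$i)) = 0"
  proof -
    fix j
    have "\<And>i. A$j$i * (real L * ((y + 0 *\<^sub>R h) $i)^(L-1) * h$i) = real L * (A$j$i * v$i)"
    proof -
      fix i have "y$i \<noteq> 0" using pos by (metis less_irrefl)
      then show "A$j$i * (real L * ((y + 0 *\<^sub>R h) $i)^(L-1) * h$i) = real L * (A$j$i * v$i)"
        by (simp add: h_def)
    qed
    then have "(\<Sum>i\<in>UNIV. A$j$i * (real L * ((y + 0 *\<^sub>R h) $i)^(L-1) * h$i)) = (\<Sum>i\<in>UNIV. real L * (A$j$i * v$i))"
      by (rule sum.cong[OF refl])
    also have "\<dots> = real L * (A *v v)$j"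
      by (simp add: matrix_vector_mult_def sum_distrib_left)
    finally have "(\<Sum>i\<in>UNIV. A$j$i * (real L * ((y + 0 *\<^sub>R h) $i)^(L-1) * h$i)) = real L * (A *v v)$j" .
    then show "(\<Sum>i\<in>UNIV. A$j$i * (real L * ((y + 0 *\<^sub>R h) $i)^(L-1) * h$i)) = 0" using Av by simp
  qed
  ultimately have "((\<lambda>s. lossL L A b (y + s *\<^sub>R h)) has_real_derivative 0) (at 0)" by simp
  with d1 show ?thesis unfolding h_def[symmetric] using DERIV_unique by blast
qed




lemma norm_line_deriv:
  assumes "u \<noteq> (0::real^'n)"
  shows "((\<lambda>s. norm (u + s *\<^sub>R h)) has_real_derivative (h \<bullet> u / norm u)) (at 0)"
proof -
  have l: "((\<lambda>s::real. u + s *\<^sub>R h) has_derivative (\<lambda>s. s *\<^sub>R h)) (at 0)"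
    by (rule derivative_eq_intros refl | simp)+
  have "((norm \<circ> (\<lambda>s::real. u + s *\<^sub>R h)) has_derivative ((\<lambda>k. k \<bullet> sgn u) \<circ> (\<lambda>s. s *\<^sub>R h))) (at 0)"
    by (rule diff_chain_at[OF l]) (simp add: has_derivative_norm assms)
  then have "((\<lambda>s. norm (u + s *\<^sub>R h)) has_derivative (\<lambda>x. inverse (norm u) * (x * (h \<bullet> u)))) (at 0)"
    by (simp add: o_def sgn_div_norm inner_commute)
  moreover have "(\<lambda>x. inverse (norm u) * (x * (h \<bullet> u))) = (*) (h \<bullet> u / norm u)"
    by (auto simp: fun_eq_iff divide_inverse)
  ultimately show ?thesis by (simp add: has_field_derivative_def)
qed

lemma U_gen:
  assumes u0: "u \<noteq> 0" and d: "((\<lambda>w. lossWN L A b r0 w) has_derivative (\<lambda>h. gu \<bullet> h)) (at u)"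
  shows "gu \<bullet> h = (1/(2*real L)) * (\<Sum>j\<in>UNIV. 2*((\<Sum>i\<in>UNIV. A$j$i*((r0 / norm u) * u$i)^L) - b$j) *
          (\<Sum>i\<in>UNIV. A$j$i * (real L * ((r0 / norm u) * u$i)^(L-1) *
             (r0 * h$i / norm u - r0 * u$i * (h \<bullet> u) / (norm u)^3))))"
proof -
  have d1: "((\<lambda>s. lossWN L A b r0 (u + s *\<^sub>R h)) has_real_derivative gu \<bullet> h) (at 0)"
    by (rule line_deriv[OF d])
  have N: "((\<lambda>s. norm (u + s *\<^sub>R h)) has_real_derivative (h \<bullet> u / norm u)) (at 0)"
    by (rule norm_line_deriv[OF u0])
  have nz: "norm u \<noteq> 0" using u0 by simp
  have "((\<lambda>s. lossL L A b ((r0 / norm (u + s *\<^sub>R h)) *\<^sub>R (u + s *\<^sub>R h))) has_real_derivative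
     (1/(2*real L)) * (\<Sum>j\<in>UNIV. 2*((\<Sum>i\<in>UNIV. A$j$i*(((r0 / norm (u + 0 *\<^sub>R h)) *\<^sub>R (u + 0 *\<^sub>R h))$i)^L) - b$j) *
          (\<Sum>i\<in>UNIV. A$j$i * (real L * (((r0 / norm (u + 0 *\<^sub>R h)) *\<^sub>R (u + 0 *\<^sub>R h))$i)^(L-1) *
             (r0 * h$i / norm u - r0 * u$i * (h \<bullet> u) / (norm u)^3))))) (at 0)"
  proof (rule E_deriv)
    fix i
    show "((\<lambda>s. ((r0 / norm (u + s *\<^sub>R h)) *\<^sub>R (u + s *\<^sub>R h)) $ i) has_real_derivative
        r0 * h$i / norm u - r0 * u$i * (h \<bullet> u) / (norm u)^3) (at 0)"
      apply simp
      apply (rule derivative_eq_intros refl N | simp add: nz u0)+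
      apply (simp add: field_simps power3_eq_cube nz del: norm_eq_zero)
      done
  qed
  then have "((\<lambda>s. lossWN L A b r0 (u + s *\<^sub>R h)) has_real_derivative
     (1/(2*real L)) * (\<Sum>j\<in>UNIV. 2*((\<Sum>i\<in>UNIV. A$j$i*((r0 / norm u) * u$i)^L) - b$j) *
          (\<Sum>i\<in>UNIV. A$j$i * (real L * ((r0 / norm u) * u$i)^(L-1) *
             (r0 * h$i / norm u - r0 * u$i * (h \<bullet> u) / (norm u)^3))))) (at 0)"
    by (simp add: lossWN_def)
  with d1 show ?thesis using DERIV_unique by blast
qed

lemma R_gen:
  assumes u0: "u \<noteq> 0" and d: "((\<lambda>s. lossWN L A b s u) has_real_derivative gr) (at r0)"
  shows "gr = (1/(2*real L)) * (\<Sum>j\<in>UNIV. 2*((\<Sum>i\<in>UNIV. A$j$i*((r0 / norm u) * u$i)^L) - b$j) *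
          (\<Sum>i\<in>UNIV. A$j$i * (real L * ((r0 / norm u) * u$i)^(L-1) * (u$i / norm u))))"
proof -
  have "((\<lambda>s. lossL L A b ((s / norm u) *\<^sub>R u)) has_real_derivative
     (1/(2*real L)) * (\<Sum>j\<in>UNIV. 2*((\<Sum>i\<in>UNIV. A$j$i*(((r0 / norm u) *\<^sub>R u)$i)^L) - b$j) *
          (\<Sum>i\<in>UNIV. A$j$i * (real L * (((r0 / norm u) *\<^sub>R u)$i)^(L-1) * (u$i / norm u))))) (at r0)"
  proof (rule E_deriv)
    fix i
    show "((\<lambda>s. ((s / norm u) *\<^sub>R u) $ i) has_real_derivative u$i / norm u) (at r0)"
      by simp (rule derivative_eq_intros refl | simp add: u0)+
  qed
  then have "((\<lambda>s. lossWN L A b s u) has_real_derivative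
     (1/(2*real L)) * (\<Sum>j\<in>UNIV. 2*((\<Sum>i\<in>UNIV. A$j$i*((r0 / norm u) * u$i)^L) - b$j) *
          (\<Sum>i\<in>UNIV. A$j$i * (real L * ((r0 / norm u) * u$i)^(L-1) * (u$i / norm u))))) (at r0)"
    by (simp add: lossWN_def)
  with d show ?thesis using DERIV_unique by blast
qed




lemma U_ortho:
  assumes d: "((\<lambda>w. lossWN L A b r0 w) has_derivative (\<lambda>h. gu \<bullet> h)) (at u)"
  shows "gu \<bullet> u = 0"
proof (cases "u = 0")
  case True then show ?thesis by simp
next
  case False
  have nz: "norm u \<noteq> 0" using False by simp
  have uu: "u \<bullet> u = (norm u)^2" by (simp add: power2_norm_eq_inner)
  have "\<And>i. r0 * u$i / norm u - r0 * u$i * (u \<bullet> u) / (norm u)^3 = 0"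
    unfolding uu using nz by (simp add: power3_eq_cube power2_eq_square field_simps del: norm_eq_zero)
  then show ?thesis using U_gen[OF False d, of u] by simp
qed

lemma U_key:
  assumes n1: "norm u = 1" and pos: "\<forall>i. u$i > 0" and Av: "A *v v = 0"
    and d: "((\<lambda>w. lossWN L A b r0 w) has_derivative (\<lambda>h. gu \<bullet> h)) (at u)"
    and dr: "((\<lambda>s. lossWN L A b s u) has_real_derivative gr) (at r0)"
  shows "gu \<bullet> (\<chi> i. v$i / (u$i)^(L-1)) = - (u \<bullet> (\<chi> i. v$i / (u$i)^(L-1))) * r0 * gr"
proof -
  define h where "h = (\<chi> i. v$i / (u$i)^(L-1))"
  have u0: "u \<noteq> 0" using n1 by auto
  have gr: "gr = (1/(2*real L)) * (\<Sum>j\<in>UNIV. 2*((\<Sum>i\<in>UNIV. A$j$i*(r0 * u$i)^L) - b$j) *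
          (\<Sum>i\<in>UNIV. A$j$i * (real L * (r0 * u$i)^(L-1) * u$i)))"
    using R_gen[OF u0 dr] n1 by simp
  have gu: "gu \<bullet> h = (1/(2*real L)) * (\<Sum>j\<in>UNIV. 2*((\<Sum>i\<in>UNIV. A$j$i*(r0 * u$i)^L) - b$j) *
          (\<Sum>i\<in>UNIV. A$j$i * (real L * (r0 * u$i)^(L-1) * (r0 * h$i - r0 * u$i * (h \<bullet> u)))))"
    using U_gen[OF u0 d, of h] n1 by simp
  have inner: "(\<Sum>i\<in>UNIV. A$j$i * (real L * (r0 * u$i)^(L-1) * (r0 * h$i - r0 * u$i * (h \<bullet> u))))
     = - (h \<bullet> u) * r0 * (\<Sum>i\<in>UNIV. A$j$i * (real L * (r0 * u$i)^(L-1) * u$i))" for j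
  proof -
    have e: "A$j$i * (real L * (r0 * u$i)^(L-1) * (r0 * h$i - r0 * u$i * (h \<bullet> u)))
       = real L * r0 ^ L * (A$j$i * v$i) - (h \<bullet> u) * r0 * (A$j$i * (real L * (r0 * u$i)^(L-1) * u$i))" for i
    proof (cases L)
      case 0 then show ?thesis by simp
    next
      case (Suc k)
      have ui: "u$i \<noteq> 0" using pos by (metis less_irrefl)
      have "(r0 * u$i)^(L-1) * (r0 * h$i) = r0 ^ L * v$i"
        using ui by (simp add: h_def Suc power_mult_distrib)
      then show ?thesis by (simp add: algebra_simps)
    qed
    have "(\<Sum>i\<in>UNIV. A$j$i * (real L * (r0 * u$i)^(L-1) * (r0 * h$i - r0 * u$i * (h \<bullet> u))))
       = real L * r0 ^ L * (A *v v)$j - (h \<bullet> u) * r0 * (\<Sum>i\<in>UNIV. A$j$i * (real L * (r0 * u$i)^(L-1) * u$i))"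
      unfolding e by (simp add: sum_subtractf sum_distrib_left matrix_vector_mult_def)
    then show ?thesis using Av by simp
  qed
  define E where "E j = 2*((\<Sum>i\<in>UNIV. A$j$i*(r0 * u$i)^L) - b$j)" for j
  define S where "S j = (\<Sum>i\<in>UNIV. A$j$i * (real L * (r0 * u$i)^(L-1) * u$i))" for j
  define k where "k = h \<bullet> u"
  have "(\<Sum>j\<in>UNIV. E j * (- k * r0 * S j)) = (- k * r0) * (\<Sum>j\<in>UNIV. E j * S j)"
    by (simp add: sum_distrib_left mult_ac)
  then show ?thesis unfolding h_def[symmetric] gu gr inner
    unfolding E_def[symmetric] S_def[symmetric] k_def[symmetric]
    by (simp add: inner_commute k_def mult_ac)
qed




lemma barrier:
  fixes p :: "real \<Rightarrow> real^'n"
  assumes cont: "continuous_on {0..} p" and p0: "\<forall>i. p 0 $ i > 0" and c: "c > 0"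
    and H: "\<And>T. T \<ge> 0 \<Longrightarrow> (\<forall>t\<in>{0..T}. \<forall>i. p t $ i > 0) \<Longrightarrow> \<forall>i. p T $ i \<ge> c"
  shows "\<forall>t\<ge>0. \<forall>i. p t $ i \<ge> c"
proof -
  have allpos: "\<forall>t\<in>{0..T}. \<forall>i. p t $ i > 0" if T0: "T \<ge> 0" for T
  proof (rule ccontr)
    assume "\<not> (\<forall>t\<in>{0..T}. \<forall>i. p t $ i > 0)"
    define K where "K = (\<Union>i. {0..T} \<inter> (\<lambda>t. p t $ i) -` {..0})"
    have KK: "K = {t\<in>{0..T}. \<exists>i. p t $ i \<le> 0}" unfolding K_def by auto
    have ne: "K \<noteq> {}" unfolding KK using \<open>\<not> _\<close> by (auto simp: not_less)
    have contT: "continuous_on {0..T} (\<lambda>t. p t $ i)" for i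
      by (rule continuous_on_component, rule continuous_on_subset[OF cont]) auto
    have "closed K" unfolding K_def
      by (intro closed_UN finite_UNIV ballI continuous_closed_preimage contT) auto
    moreover have "bounded K" unfolding KK by (rule bounded_subset[of "{0..T}"]) auto
    ultimately have "compact K" using compact_eq_bounded_closed by blast
    then obtain \<tau> where \<tau>K: "\<tau> \<in> K" and \<tau>min: "\<forall>t\<in>K. \<tau> \<le> t"
      using compact_attains_inf[OF _ ne] by blast
    have \<tau>T: "0 \<le> \<tau>" "\<tau> \<le> T" using \<tau>K unfolding KK by auto
    have "\<tau> \<noteq> 0" using \<tau>K p0 unfolding KK by (auto simp: not_less[symmetric])
    then have \<tau>pos: "\<tau> > 0" using \<tau>T by simp
    have good: "\<forall>i. p t $ i \<ge> c" if "0 \<le> t" "t < \<tau>" for t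
    proof (rule H[OF that(1)], intro ballI allI)
      fix s i assume "s \<in> {0..t}"
      then have "s \<notin> K" using \<tau>min that by fastforce
      then show "p s $ i > 0" unfolding KK using \<open>s \<in> {0..t}\<close> that \<tau>T by (auto simp: not_le)
    qed
    have ge: "p \<tau> $ i \<ge> c" for i
    proof -
      define S where "S = {0..\<tau>} \<inter> (\<lambda>t. p t $ i) -` {c..}"
      have cS: "closed S" unfolding S_def
        by (intro continuous_closed_preimage continuous_on_component continuous_on_subset[OF cont]) auto
      have "{0..<\<tau>} \<subseteq> S" unfolding S_def using good by auto
      then have "closure {0..<\<tau>} \<subseteq> S" using cS closure_minimal by blast
      moreover have "\<tau> \<in> {0..\<tau>}" using \<tau>T by simp
      ultimately have "\<tau> \<in> S" using closure_atLeastLessThan[OF \<tau>pos] by blast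
      then show ?thesis unfolding S_def by auto
    qed
    obtain i where "p \<tau> $ i \<le> 0" using \<tau>K unfolding KK by blast
    then show False using ge[of i] c by linarith
  qed
  show ?thesis using H allpos by blast
qed




lemma const_on:
  fixes f :: "real \<Rightarrow> real"
  assumes "\<And>t. t \<in> {0..T} \<Longrightarrow> (f has_real_derivative 0) (at t within {0..})" "0 \<le> T"
  shows "f T = f 0"
proof -
  have "\<And>t. t \<in> {0..T} \<Longrightarrow> (f has_derivative (\<lambda>h. 0)) (at t within {0..T})"
  proof -
    fix t assume "t \<in> {0..T}"
    then have "(f has_real_derivative 0) (at t within {0..T})"
      using has_field_derivative_subset[OF assms(1)] by auto
    moreover have "(*) (0::real) = (\<lambda>h. 0)" by auto
    ultimately show "(f has_derivative (\<lambda>h. 0)) (at t within {0..T})"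
      by (simp add: has_field_derivative_def)
  qed
  then obtain c where "\<forall>x\<in>{0..T}. f x = c" using has_derivative_zero_constant[of "{0..T}" f] by auto
  then show ?thesis using assms(2) by auto
qed

lemma mono_on:
  fixes f :: "real \<Rightarrow> real"
  assumes d: "\<And>t. t \<in> {0..T} \<Longrightarrow> (f has_real_derivative f' t) (at t within {0..})"
    and nn: "\<And>t. t \<in> {0..T} \<Longrightarrow> f' t \<ge> 0" and T: "0 \<le> T"
  shows "f 0 \<le> f T"
proof (rule DERIV_nonneg_imp_increasing_open[OF T])
  fix t assume t: "0 < t" "t < T"
  have "(f has_real_derivative f' t) (at t within {0<..})"
  proof -
    have "{0<..} \<subseteq> {0::real..}" by auto
    moreover have "t \<in> {0..T}" using t by auto
    ultimately show ?thesis using has_field_derivative_subset[OF d] by blast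
  qed
  then have "(f has_real_derivative f' t) (at t)"
    using at_within_open[of t "{0<..}"] t by auto
  then show "\<exists>y. (f has_real_derivative y) (at t) \<and> 0 \<le> y" using nn t by auto
next
  show "continuous_on {0..T} f"
    unfolding continuous_on_eq_continuous_within
  proof
    fix t assume "t \<in> {0..T}"
    then have "continuous (at t within {0..}) f" using d DERIV_continuous by blast
    then show "continuous (at t within {0..T}) f" using continuous_within_subset by fastforce
  qed
qed

lemma inv_pow_deriv:
  fixes f :: "real \<Rightarrow> real"
  assumes "(f has_real_derivative f') (at t within S)" "f t > 0"
  shows "((\<lambda>s. c / (f s)^k) has_real_derivative (- real k * c * f' / (f t)^(k+1))) (at t within S)"
  using assms
  apply -
  apply (rule derivative_eq_intros refl | assumption | simp)+
  apply (cases k)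
   apply (simp_all add: field_simps power2_eq_square)
  done

lemma ln_deriv:
  fixes f :: "real \<Rightarrow> real"
  assumes "(f has_real_derivative f') (at t within S)" "f t > 0"
  shows "((\<lambda>s. c * ln (f s)) has_real_derivative (c * f' / f t)) (at t within S)"
  using assms
  apply -
  apply (rule derivative_eq_intros refl | assumption | simp)+
  done

lemma conv_bounds:
  fixes f :: "real \<Rightarrow> real"
  assumes cont: "continuous_on {0..} f" and lim: "(f \<longlongrightarrow> l) at_top"
  shows "\<exists>R. \<forall>t\<ge>0. \<bar>f t\<bar> \<le> R"
    and "(\<forall>t\<ge>0. f t \<noteq> 0) \<Longrightarrow> l \<noteq> 0 \<Longrightarrow> \<exists>m>0. \<forall>t\<ge>0. \<bar>f t\<bar> \<ge> m"
proof -
  have "\<bar>l\<bar>/2 + (if l = 0 then 1 else 0) > 0" by auto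
  from tendstoD[OF lim this]
  have ev: "eventually (\<lambda>t. dist (f t) l < \<bar>l\<bar>/2 + (if l = 0 then 1 else 0)) at_top" .
  then obtain T0 where T0: "\<And>t. t \<ge> T0 \<Longrightarrow> dist (f t) l < \<bar>l\<bar>/2 + (if l = 0 then 1 else 0)"
    by (auto simp: eventually_at_top_linorder)
  define T where "T = max T0 0"
  have cT: "continuous_on {0..T} (\<lambda>t. \<bar>f t\<bar>)"
    by (intro continuous_intros continuous_on_subset[OF cont]) auto
  have ne: "{0..T} \<noteq> {}" by (simp add: T_def)
  obtain s1 where s1: "s1 \<in> {0..T}" "\<forall>y\<in>{0..T}. \<bar>f y\<bar> \<le> \<bar>f s1\<bar>"
    using continuous_attains_sup[OF compact_Icc ne cT] by auto
  obtain s2 where s2: "s2 \<in> {0..T}" "\<forall>y\<in>{0..T}. \<bar>f s2\<bar> \<le> \<bar>f y\<bar>"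
    using continuous_attains_inf[OF compact_Icc ne cT] by auto
  have tail: "\<bar>f t\<bar> \<le> 3/2*\<bar>l\<bar> + 1" "l \<noteq> 0 \<longrightarrow> \<bar>f t\<bar> \<ge> \<bar>l\<bar>/2" if "t \<ge> T" for t
  proof -
    have "\<bar>f t - l\<bar> < \<bar>l\<bar> / 2 + (if l = 0 then 1 else 0)" using T0[of t] that unfolding T_def dist_real_def by auto
    note bd = this
    have t1: "\<bar>f t\<bar> - \<bar>l\<bar> \<le> \<bar>f t - l\<bar>" by (rule abs_triangle_ineq2)
    have t2: "\<bar>l\<bar> - \<bar>f t\<bar> \<le> \<bar>f t - l\<bar>" using abs_triangle_ineq2[of l "f t"] by (simp add: abs_minus_commute)
    have "\<bar>f t - l\<bar> < \<bar>l\<bar>/2 + 1" using bd by (auto split: if_splits)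
    then show "\<bar>f t\<bar> \<le> 3/2*\<bar>l\<bar> + 1" using t1 by linarith
    show "l \<noteq> 0 \<longrightarrow> \<bar>f t\<bar> \<ge> \<bar>l\<bar>/2"
    proof
      assume "l \<noteq> 0" then have "\<bar>f t - l\<bar> < \<bar>l\<bar>/2" using bd by simp
      then show "\<bar>f t\<bar> \<ge> \<bar>l\<bar>/2" using t2 by linarith
    qed
  qed
  show "\<exists>R. \<forall>t\<ge>0. \<bar>f t\<bar> \<le> R"
  proof (intro exI allI impI)
    fix t :: real assume "t \<ge> 0"
    show "\<bar>f t\<bar> \<le> max \<bar>f s1\<bar> (3/2*\<bar>l\<bar> + 1)"
    proof (cases "t \<le> T")
      case True then have "\<bar>f t\<bar> \<le> \<bar>f s1\<bar>" using s1 \<open>t \<ge> 0\<close> by auto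
      then show ?thesis by (simp add: le_max_iff_disj)
    next
      case False then show ?thesis using tail(1)[of t] by auto
    qed
  qed
  assume nz: "\<forall>t\<ge>0. f t \<noteq> 0" and l: "l \<noteq> 0"
  show "\<exists>m>0. \<forall>t\<ge>0. \<bar>f t\<bar> \<ge> m"
  proof (intro exI conjI allI impI)
    show "0 < min \<bar>f s2\<bar> (\<bar>l\<bar>/2)" using nz s2 l by auto
    fix t :: real assume "t \<ge> 0"
    show "min \<bar>f s2\<bar> (\<bar>l\<bar>/2) \<le> \<bar>f t\<bar>"
    proof (cases "t \<le> T")
      case True then have "\<bar>f t\<bar> \<ge> \<bar>f s2\<bar>" using s2 \<open>t \<ge> 0\<close> by auto
      then show ?thesis by (simp add: min_le_iff_disj)
    next
      case False then show ?thesis using tail(2)[of t] l by auto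
    qed
  qed
qed




lemma flow_cont:
  assumes "\<And>t. t \<ge> 0 \<Longrightarrow> (x has_vector_derivative x' t) (at t within {0..})"
  shows "continuous_on {0..} x"
  unfolding continuous_on_eq_continuous_within
proof
  fix t :: real assume "t \<in> {0..}"
  then show "continuous (at t within {0..}) x"
    using assms[of t] has_vector_derivative_continuous by auto
qed

lemma x_part:
  fixes A :: "real^'n^'m" and x :: "real \<Rightarrow> real^'n"
  assumes L: "L \<ge> 2" and gf: "grad_flow L A b x" and x0: "\<forall>i. x 0 $ i > 0"
    and vpos: "\<forall>i. v$i > 0" and Av: "A *v v = 0" and C: "\<forall>t\<ge>0. \<forall>i. x t $ i \<le> C"
  shows "\<exists>c>0. \<forall>t\<ge>0. \<forall>i. x t $ i \<ge> c"
proof -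
  from gf have "\<forall>t. \<exists>g. 0 \<le> t \<longrightarrow> (lossL L A b has_derivative (\<lambda>h. g \<bullet> h)) (at (x t)) \<and>
                 (x has_vector_derivative (- g)) (at t within {0..})"
    by (auto simp: grad_flow_def)
  then obtain G where G: "\<And>t. 0 \<le> t \<Longrightarrow> (lossL L A b has_derivative (\<lambda>h. G t \<bullet> h)) (at (x t)) \<and>
                 (x has_vector_derivative (- G t)) (at t within {0..})"
    by metis
  have cont: "continuous_on {0..} x" using G by (intro flow_cont) blast
  have xd: "((\<lambda>s. x s $ i) has_real_derivative - (G t $ i)) (at t within {0..})" if "t \<ge> 0" for t i
    using vd_comp'[OF conjunct2[OF G[OF that]], of i] by simp
  have key: "G t \<bullet> (\<chi> i. v$i / (x t$i)^(L-1)) = 0" if "t \<ge> 0" "\<forall>i. x t $ i > 0" for t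
    using X1[OF that(2) Av _ conjunct1[OF G[OF that(1)]]] L by simp
  have key': "(\<Sum>i\<in>UNIV. G t $ i * (v$i / (x t$i)^(L-1))) = 0" if "t \<ge> 0" "\<forall>i. x t $ i > 0" for t
    using key[OF that] by (simp add: inner_vec_def)
  define C' where "C' = max C 1"
  have C'1: "C' \<ge> 1" and xC': "\<And>t i. t \<ge> 0 \<Longrightarrow> x t $ i \<le> C'" using C by (auto simp: C'_def le_max_iff_disj)
  show ?thesis
  proof (cases "L = 2")
    case True
    define \<Phi> where "\<Phi> t = (\<Sum>i\<in>UNIV. v$i * ln (x t $ i))" for t
    define M where "M = (\<Sum>i\<in>UNIV. v$i * ln C')"
    define c where "c = Min (range (\<lambda>j. exp ((\<Phi> 0 - M) / v$j)))"
    have cpos: "c > 0" unfolding c_def by (subst Min_gr_iff) auto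
    have "\<forall>t\<ge>0. \<forall>i. x t $ i \<ge> c"
    proof (rule barrier[OF cont x0 cpos])
      fix T :: real assume T: "T \<ge> 0" and pos: "\<forall>t\<in>{0..T}. \<forall>i. x t $ i > 0"
      have "\<Phi> T = \<Phi> 0"
      proof (rule const_on[OF _ T])
        fix t assume t: "t \<in> {0..T}"
        have "((\<lambda>s. \<Sum>i\<in>UNIV. v$i * ln (x s $ i)) has_real_derivative
               (\<Sum>i\<in>UNIV. v$i * (- (G t $ i)) / x t $ i)) (at t within {0..})"
          by (rule DERIV_sum, rule ln_deriv[OF xd]) (use t pos in auto)
        moreover have "(\<Sum>i\<in>UNIV. v$i * (- (G t $ i)) / x t $ i) = - (\<Sum>i\<in>UNIV. G t $ i * (v$i / (x t$i)^(L-1)))"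
          using True by (simp add: sum_negf[symmetric] mult_ac)
        ultimately show "(\<Phi> has_real_derivative 0) (at t within {0..})"
          unfolding \<Phi>_def using key'[of t] t pos by simp
      qed
      show "\<forall>j. x T $ j \<ge> c"
      proof
        fix j
        have xp: "\<And>i. x T $ i > 0" using pos T by auto
        have le: "v$i * ln (x T $ i) \<le> v$i * ln C'" for i
          using xp[of i] xC'[OF T, of i] vpos[rule_format, of i] by (intro mult_left_mono) auto
        have nn: "v$i * ln C' \<ge> 0" for i using vpos C'1 by (simp add: less_imp_le)
        have "(\<Sum>i\<in>UNIV - {j}. v$i * ln (x T $ i)) \<le> (\<Sum>i\<in>UNIV - {j}. v$i * ln C')"
          by (rule sum_mono) (rule le)
        also have "\<dots> \<le> M" unfolding M_def by (rule sum_mono2) (auto intro: nn)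
        finally have s: "(\<Sum>i\<in>UNIV - {j}. v$i * ln (x T $ i)) \<le> M" .
        have "\<Phi> T = v$j * ln (x T $ j) + (\<Sum>i\<in>UNIV - {j}. v$i * ln (x T $ i))"
          unfolding \<Phi>_def by (rule sum.remove) auto
        then have "v$j * ln (x T $ j) \<ge> \<Phi> 0 - M" using s \<open>\<Phi> T = \<Phi> 0\<close> by linarith
        then have "ln (x T $ j) \<ge> (\<Phi> 0 - M) / v$j" using vpos by (simp add: field_simps)
        then have "exp ((\<Phi> 0 - M) / v$j) \<le> x T $ j" using xp[of j]
          by (metis exp_le_cancel_iff exp_ln)
        moreover have "c \<le> exp ((\<Phi> 0 - M) / v$j)" unfolding c_def by (rule Min_le) auto
        ultimately show "c \<le> x T $ j" by linarith
      qed
    qed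
    then show ?thesis using cpos by blast
  next
    case False
    define k where "k = L - 2"
    have k1: "k \<ge> 1" and Lk: "L - 1 = k + 1" using L False by (auto simp: k_def)
    define \<Phi> where "\<Phi> t = (\<Sum>i\<in>UNIV. v$i / (x t $ i)^k)" for t
    have \<Phi>0: "\<Phi> 0 > 0" unfolding \<Phi>_def using vpos x0
      by (intro sum_pos) auto
    define c where "c = Min (range (\<lambda>j. v$j / (\<Phi> 0 * C'^(k-1))))"
    have cpos: "c > 0" unfolding c_def using \<Phi>0 vpos C'1 by (subst Min_gr_iff) auto
    have "\<forall>t\<ge>0. \<forall>i. x t $ i \<ge> c"
    proof (rule barrier[OF cont x0 cpos])
      fix T :: real assume T: "T \<ge> 0" and pos: "\<forall>t\<in>{0..T}. \<forall>i. x t $ i > 0"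
      have "\<Phi> T = \<Phi> 0"
      proof (rule const_on[OF _ T])
        fix t assume t: "t \<in> {0..T}"
        have "((\<lambda>s. \<Sum>i\<in>UNIV. v$i / (x s $ i)^k) has_real_derivative
               (\<Sum>i\<in>UNIV. - real k * v$i * (- (G t $ i)) / (x t $ i)^(k+1))) (at t within {0..})"
          by (rule DERIV_sum, rule inv_pow_deriv[OF xd]) (use t pos in auto)
        moreover have "(\<Sum>i\<in>UNIV. - real k * v$i * (- (G t $ i)) / (x t $ i)^(k+1)) = real k * (\<Sum>i\<in>UNIV. G t $ i * (v$i / (x t$i)^(L-1)))"
          unfolding Lk by (simp add: sum_distrib_left mult_ac)
        ultimately show "(\<Phi> has_real_derivative 0) (at t within {0..})"
          unfolding \<Phi>_def using key'[of t] t pos by simp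
      qed
      show "\<forall>j. x T $ j \<ge> c"
      proof
        fix j
        have xp: "\<And>i. x T $ i > 0" using pos T by auto
        have "v$j / (x T $ j)^k \<le> \<Phi> T" unfolding \<Phi>_def
          by (rule member_le_sum) (use vpos xp in \<open>auto intro: less_imp_le\<close>)
        then have a: "v$j / (x T $ j)^k \<le> \<Phi> 0" using \<open>\<Phi> T = \<Phi> 0\<close> by simp
        have xk: "(x T $ j)^k > 0" using xp by simp
        have b: "v$j \<le> \<Phi> 0 * (x T $ j)^k" using a xk by (simp add: field_simps)
        have "(x T $ j)^k = x T $ j * (x T $ j)^(k-1)" using k1 by (cases k) auto
        also have "\<dots> \<le> x T $ j * C'^(k-1)"
          using xp[of j] xC'[OF T, of j] by (intro mult_left_mono power_mono) auto
        finally have "v$j \<le> \<Phi> 0 * (x T $ j * C'^(k-1))"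
          using b \<Phi>0 by (meson mult_left_mono less_imp_le order_trans)
        then have "v$j / (\<Phi> 0 * C'^(k-1)) \<le> x T $ j" using \<Phi>0 C'1
          by (simp add: field_simps)
        moreover have "c \<le> v$j / (\<Phi> 0 * C'^(k-1))" unfolding c_def by (rule Min_le) auto
        ultimately show "c \<le> x T $ j" by linarith
      qed
    qed
    then show ?thesis using cpos by blast
  qed
qed




lemma wn_extract:
  assumes "wn_flow L A b eta 1 r u"
  obtains GR GU where "\<And>t. 0 \<le> t \<Longrightarrow>
        ((\<lambda>s. lossWN L A b s (u t)) has_real_derivative GR t) (at (r t)) \<and>
        ((\<lambda>w. lossWN L A b (r t) w) has_derivative (\<lambda>h. GU t \<bullet> h)) (at (u t)) \<and>
        (r has_real_derivative (- eta * GR t)) (at t within {0..}) \<and>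
        (u has_vector_derivative (- GU t)) (at t within {0..})"
proof -
  from assms have "\<forall>t. \<exists>gr gu. 0 \<le> t \<longrightarrow>
        ((\<lambda>s. lossWN L A b s (u t)) has_real_derivative gr) (at (r t)) \<and>
        ((\<lambda>w. lossWN L A b (r t) w) has_derivative (\<lambda>h. gu \<bullet> h)) (at (u t)) \<and>
        (r has_real_derivative (- eta * gr)) (at t within {0..}) \<and>
        (u has_vector_derivative (- gu)) (at t within {0..})"
    by (auto simp: wn_flow_def)
  then obtain GR GU where "\<forall>t. 0 \<le> t \<longrightarrow>
        ((\<lambda>s. lossWN L A b s (u t)) has_real_derivative GR t) (at (r t)) \<and>
        ((\<lambda>w. lossWN L A b (r t) w) has_derivative (\<lambda>h. GU t \<bullet> h)) (at (u t)) \<and>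
        (r has_real_derivative (- eta * GR t)) (at t within {0..}) \<and>
        (u has_vector_derivative (- GU t)) (at t within {0..})"
    by metis
  then show ?thesis using that by blast
qed

lemma u_norm:
  fixes u :: "real \<Rightarrow> real^'n"
  assumes GU: "\<And>t. 0 \<le> t \<Longrightarrow> ((\<lambda>w. lossWN L A b (r t) w) has_derivative (\<lambda>h. GU t \<bullet> h)) (at (u t))"
    and ud: "\<And>t. 0 \<le> t \<Longrightarrow> (u has_vector_derivative (- GU t)) (at t within {0..})"
    and n0: "norm (u 0) = 1"
  shows "\<forall>t\<ge>0. norm (u t) = 1"
proof -
  have "\<And>t. t \<in> {0..} \<Longrightarrow> ((\<lambda>s. u s \<bullet> u s) has_derivative (\<lambda>h. 0)) (at t within {0..})"
  proof -
    fix t :: real assume "t \<in> {0..}"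
    then have t: "0 \<le> t" by simp
    have d: "(u has_derivative (\<lambda>h. h *\<^sub>R (- GU t))) (at t within {0..})"
      using ud[OF t] by (simp add: has_vector_derivative_def)
    have o: "GU t \<bullet> u t = 0" by (rule U_ortho[OF GU[OF t]])
    have "((\<lambda>s. u s \<bullet> u s) has_derivative (\<lambda>h. u t \<bullet> (h *\<^sub>R (- GU t)) + (h *\<^sub>R (- GU t)) \<bullet> u t)) (at t within {0..})"
      by (rule has_derivative_inner[OF d d])
    moreover have "(\<lambda>h. u t \<bullet> (h *\<^sub>R (- GU t)) + (h *\<^sub>R (- GU t)) \<bullet> u t) = (\<lambda>h. 0)"
      using o by (auto simp: inner_commute)
    ultimately show "((\<lambda>s. u s \<bullet> u s) has_derivative (\<lambda>h. 0)) (at t within {0..})" by simp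
  qed
  then obtain c where c: "\<forall>t\<in>{0..}. u t \<bullet> u t = c"
    using has_derivative_zero_constant[of "{0::real..}" "\<lambda>s. u s \<bullet> u s"] by auto
  have "c = 1" using c[rule_format, of 0] n0 by (simp add: power2_norm_eq_inner[symmetric])
  show ?thesis
  proof (intro allI impI)
    fix t :: real assume "0 \<le> t"
    then have "(norm (u t))^2 = 1" using c \<open>c = 1\<close> by (simp add: power2_norm_eq_inner)
    then show "norm (u t) = 1" using norm_ge_zero[of "u t"] by (auto simp: power2_eq_1_iff)
  qed
qed




lemma u_lower:
  fixes u :: "real \<Rightarrow> real^'n" and A :: "real^'n^'m"
  assumes L: "L \<ge> 2" and eta: "eta > 0"
    and GR: "\<And>t. 0 \<le> t \<Longrightarrow> ((\<lambda>s. lossWN L A b s (u t)) has_real_derivative GR t) (at (r t))"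
    and GU: "\<And>t. 0 \<le> t \<Longrightarrow> ((\<lambda>w. lossWN L A b (r t) w) has_derivative (\<lambda>h. GU t \<bullet> h)) (at (u t))"
    and rd: "\<And>t. 0 \<le> t \<Longrightarrow> (r has_real_derivative (- eta * GR t)) (at t within {0..})"
    and ud: "\<And>t. 0 \<le> t \<Longrightarrow> (u has_vector_derivative (- GU t)) (at t within {0..})"
    and n1: "\<forall>t\<ge>0. norm (u t) = 1" and u0: "\<forall>i. u 0 $ i > 0"
    and vpos: "\<forall>i. v$i > 0" and Av: "A *v v = 0" and R: "\<forall>t\<ge>0. \<bar>r t\<bar> \<le> R"
  shows "\<exists>c>0. \<forall>t\<ge>0. \<forall>i. u t $ i \<ge> c"
proof -
  have cont: "continuous_on {0..} u" using ud by (intro flow_cont) blast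
  have udi: "((\<lambda>s. u s $ i) has_real_derivative - (GU t $ i)) (at t within {0..})" if "t \<ge> 0" for t i
    using vd_comp'[OF ud[OF that], of i] by simp
  have key: "(\<Sum>i\<in>UNIV. GU t $ i * (v$i / (u t$i)^(L-1))) =
      - (\<Sum>i\<in>UNIV. u t $ i * (v$i / (u t$i)^(L-1))) * r t * GR t"
    if "t \<ge> 0" "\<forall>i. u t $ i > 0" for t
    using U_key[OF n1[rule_format, OF that(1)] that(2) Av GU[OF that(1)] GR[OF that(1)]]
    by (simp add: inner_vec_def)
  have ule1: "u t $ i \<le> 1" if "t \<ge> 0" for t i
    using component_le_norm_cart[of "u t" i] n1 that by auto
  have r2: "(r t)^2 \<le> R^2" if "t \<ge> 0" for t
    using R that by (metis abs_ge_zero power2_abs power_mono)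
  show ?thesis
  proof (cases "L = 2")
    case True
    define V where "V = (\<Sum>i\<in>UNIV. v$i)"
    define Q where "Q t = (\<Sum>i\<in>UNIV. v$i * ln (u t $ i))" for t
    define Z where "Z t = Q t + V * (r t)^2 / (2*eta)" for t
    define Qm where "Qm = Q 0 - V * R^2 / (2*eta)"
    define c where "c = Min (range (\<lambda>j. exp (Qm / v$j)))"
    have cpos: "c > 0" unfolding c_def by (subst Min_gr_iff) auto
    have "\<forall>t\<ge>0. \<forall>i. u t $ i \<ge> c"
    proof (rule barrier[OF cont u0 cpos])
      fix T :: real assume T: "T \<ge> 0" and pos: "\<forall>t\<in>{0..T}. \<forall>i. u t $ i > 0"
      have "Z T = Z 0"
      proof (rule const_on[OF _ T])
        fix t assume t: "t \<in> {0..T}"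
        have tp: "\<forall>i. u t $ i > 0" using t pos by auto
        have t0: "0 \<le> t" using t by auto
        have dQ: "((\<lambda>s. \<Sum>i\<in>UNIV. v$i * ln (u s $ i)) has_real_derivative
               (\<Sum>i\<in>UNIV. v$i * (- (GU t $ i)) / u t $ i)) (at t within {0..})"
          by (rule DERIV_sum, rule ln_deriv[OF udi]) (use t pos in auto)
        have dR: "((\<lambda>s. V * (r s)^2 / (2*eta)) has_real_derivative
               V * (2 * r t * (- eta * GR t)) / (2*eta)) (at t within {0..})"
          using rd[of t] t by (auto intro!: derivative_eq_intros)
        have e1: "(\<Sum>i\<in>UNIV. v$i * (- (GU t $ i)) / u t $ i) = - (\<Sum>i\<in>UNIV. GU t $ i * (v$i / (u t$i)^(L-1)))"
          using True by (simp add: sum_negf[symmetric] mult_ac)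
        have e2: "(\<Sum>i\<in>UNIV. u t $ i * (v$i / (u t$i)^(L-1))) = V"
          unfolding V_def using True tp by (intro sum.cong) (auto simp: less_imp_neq[symmetric])
        have "(\<Sum>i\<in>UNIV. v$i * (- (GU t $ i)) / u t $ i) + V * (2 * r t * (- eta * GR t)) / (2*eta) = 0"
          unfolding e1 key[OF t0 tp] e2 using t eta by (simp add: field_simps)
        then show "(Z has_real_derivative 0) (at t within {0..})"
          unfolding Z_def Q_def using DERIV_add[OF dQ dR] by simp
      qed
      show "\<forall>j. u T $ j \<ge> c"
      proof
        fix j
        have up: "\<And>i. u T $ i > 0" using pos T by auto
        have "Q T = Q 0 + V * (r 0)^2 / (2*eta) - V * (r T)^2 / (2*eta)"
          using \<open>Z T = Z 0\<close> unfolding Z_def by simp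
        moreover have "V * (r T)^2 / (2*eta) \<le> V * R^2 / (2*eta)"
          using r2[OF T] eta vpos unfolding V_def
          by (intro divide_right_mono mult_left_mono sum_nonneg) (auto intro: less_imp_le)
        moreover have "V * (r 0)^2 / (2*eta) \<ge> 0"
          using eta vpos unfolding V_def by (intro divide_nonneg_pos mult_nonneg_nonneg sum_nonneg) (auto intro: less_imp_le)
        ultimately have QT: "Q T \<ge> Qm" unfolding Qm_def by linarith
        have np: "v$i * ln (u T $ i) \<le> 0" for i
          using up[of i] ule1[OF T, of i] vpos[rule_format, of i]
          by (intro mult_nonneg_nonpos) auto
        have "Q T = v$j * ln (u T $ j) + (\<Sum>i\<in>UNIV - {j}. v$i * ln (u T $ i))"
          unfolding Q_def by (rule sum.remove) auto
        moreover have "(\<Sum>i\<in>UNIV - {j}. v$i * ln (u T $ i)) \<le> 0" by (rule sum_nonpos) (rule np)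
        ultimately have "v$j * ln (u T $ j) \<ge> Qm" using QT by linarith
        then have "ln (u T $ j) \<ge> Qm / v$j" using vpos by (simp add: field_simps)
        then have "exp (Qm / v$j) \<le> u T $ j" using up[of j]
          by (metis exp_le_cancel_iff exp_ln)
        moreover have "c \<le> exp (Qm / v$j)" unfolding c_def by (rule Min_le) auto
        ultimately show "c \<le> u T $ j" by linarith
      qed
    qed
    then show ?thesis using cpos by blast
  next
    case False
    define k where "k = L - 2"
    have k1: "k \<ge> 1" and Lk: "L - 1 = k + 1" using L False by (auto simp: k_def)
    define S where "S t = (\<Sum>i\<in>UNIV. v$i / (u t $ i)^k)" for t
    define Z where "Z t = S t * exp (- real k * (r t)^2 / (2*eta))" for t
    have S0: "S 0 > 0" unfolding S_def using vpos u0 by (intro sum_pos) auto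
    define B where "B = S 0 * exp (real k * R^2 / (2*eta))"
    have Bpos: "B > 0" unfolding B_def using S0 by simp
    define c where "c = Min (range (\<lambda>j. v$j / B))"
    have cpos: "c > 0" unfolding c_def using Bpos vpos by (subst Min_gr_iff) auto
    have "\<forall>t\<ge>0. \<forall>i. u t $ i \<ge> c"
    proof (rule barrier[OF cont u0 cpos])
      fix T :: real assume T: "T \<ge> 0" and pos: "\<forall>t\<in>{0..T}. \<forall>i. u t $ i > 0"
      have "Z T = Z 0"
      proof (rule const_on[OF _ T])
        fix t assume t: "t \<in> {0..T}"
        have tp: "\<forall>i. u t $ i > 0" using t pos by auto
        have t0: "0 \<le> t" using t by auto
        have dS: "(S has_real_derivative
               (\<Sum>i\<in>UNIV. - real k * v$i * (- (GU t $ i)) / (u t $ i)^(k+1))) (at t within {0..})"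
          unfolding S_def by (rule DERIV_sum, rule inv_pow_deriv[OF udi]) (use t pos in auto)
        have dE: "((\<lambda>s. exp (- real k * (r s)^2 / (2*eta))) has_real_derivative
               exp (- real k * (r t)^2 / (2*eta)) * (- real k * (2 * r t * (- eta * GR t)) / (2*eta))) (at t within {0..})"
          using rd[of t] t by (auto intro!: derivative_eq_intros)
        have e1: "(\<Sum>i\<in>UNIV. - real k * v$i * (- (GU t $ i)) / (u t $ i)^(k+1)) = real k * (\<Sum>i\<in>UNIV. GU t $ i * (v$i / (u t$i)^(L-1)))"
          unfolding Lk by (simp add: sum_distrib_left mult_ac)
        have e2: "(\<Sum>i\<in>UNIV. u t $ i * (v$i / (u t$i)^(L-1))) = S t"
          unfolding S_def Lk using tp by (intro sum.cong) (auto simp: less_imp_neq[symmetric])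
        have dS': "(S has_real_derivative - real k * S t * r t * GR t) (at t within {0..})"
          using dS unfolding e1 key[OF t0 tp] e2 using t by (simp add: mult_ac)
        show "(Z has_real_derivative 0) (at t within {0..})"
          unfolding Z_def using DERIV_mult[OF dS' dE] eta by (simp add: field_simps)
      qed
      show "\<forall>j. u T $ j \<ge> c"
      proof
        fix j
        have up: "\<And>i. u T $ i > 0" using pos T by auto
        have arg: "(- real k * (r 0)^2 / (2*eta)) - (- real k * (r T)^2 / (2*eta)) = real k * ((r T)^2 - (r 0)^2) / (2*eta)"
          by (simp add: diff_divide_distrib right_diff_distrib)
        have "S T = S 0 * exp (- real k * (r 0)^2 / (2*eta)) / exp (- real k * (r T)^2 / (2*eta))"
          using \<open>Z T = Z 0\<close> unfolding Z_def by (simp add: field_simps)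
        also have "\<dots> = S 0 * exp ((- real k * (r 0)^2 / (2*eta)) - (- real k * (r T)^2 / (2*eta)))"
          by (simp only: exp_diff times_divide_eq_right)
        also have "\<dots> = S 0 * exp (real k * ((r T)^2 - (r 0)^2) / (2*eta))"
          by (simp only: arg)
        also have "\<dots> \<le> B" unfolding B_def
        proof -
          have "real k * (r T)^2 \<le> real k * R^2" using r2[OF T] by (intro mult_left_mono) auto
          moreover have "real k * (r 0)^2 \<ge> 0" by simp
          ultimately have "real k * ((r T)^2 - (r 0)^2) \<le> real k * R^2" unfolding right_diff_distrib by linarith
          then have "real k * ((r T)^2 - (r 0)^2) / (2*eta) \<le> real k * R^2 / (2*eta)"
            using eta by (intro divide_right_mono) auto
          then show "S 0 * exp (real k * ((r T)^2 - (r 0)^2) / (2*eta)) \<le> S 0 * exp (real k * R^2 / (2*eta))"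
            using S0 by (intro mult_left_mono) auto
        qed
        finally have ST: "S T \<le> B" .
        have "v$j / (u T $ j)^k \<le> S T" unfolding S_def
          by (rule member_le_sum) (use vpos up in \<open>auto intro: less_imp_le\<close>)
        then have a: "v$j / (u T $ j)^k \<le> B" using ST by simp
        have uk: "(u T $ j)^k > 0" using up by simp
        have b: "v$j \<le> B * (u T $ j)^k" using a uk by (simp add: field_simps)
        have "(u T $ j)^k \<le> (u T $ j)^1"
          using up[of j] ule1[OF T, of j] k1 by (intro power_decreasing) auto
        then have "B * (u T $ j)^k \<le> B * u T $ j" using Bpos by (intro mult_left_mono) auto
        then have "v$j \<le> B * u T $ j" using b by linarith
        then have "v$j / B \<le> u T $ j" using Bpos by (simp add: field_simps)
        moreover have "c \<le> v$j / B" unfolding c_def by (rule Min_le) auto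
        ultimately show "c \<le> u T $ j" by linarith
      qed
    qed
    then show ?thesis using cpos by blast
  qed
qed




definition Gf :: "nat \<Rightarrow> real^'n^'m \<Rightarrow> real^'m \<Rightarrow> real \<Rightarrow> real^'n \<Rightarrow> real" where
  "Gf L A b s w = (1/(2*real L)) * (\<Sum>j\<in>UNIV. 2*((\<Sum>i\<in>UNIV. A$j$i*(s * w$i)^L) - b$j) *
          (\<Sum>i\<in>UNIV. A$j$i * (real L * (w$i)^(L-1) * w$i)))"

lemma GR_factor:
  assumes n1: "norm u = 1" and dr: "((\<lambda>s. lossWN L A b s u) has_real_derivative gr) (at r0)"
  shows "gr = r0^(L-1) * Gf L A b r0 u"
proof -
  have u0: "u \<noteq> 0" using n1 by auto
  have "gr = (1/(2*real L)) * (\<Sum>j\<in>UNIV. 2*((\<Sum>i\<in>UNIV. A$j$i*(r0 * u$i)^L) - b$j) *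
          (\<Sum>i\<in>UNIV. A$j$i * (real L * (r0 * u$i)^(L-1) * u$i)))"
    using R_gen[OF u0 dr] n1 by simp
  also have "\<dots> = r0^(L-1) * Gf L A b r0 u"
  proof -
    have inner: "(\<Sum>i\<in>UNIV. A$j$i * (real L * (r0 * u$i)^(L-1) * u$i))
       = r0^(L-1) * (\<Sum>i\<in>UNIV. A$j$i * (real L * (u$i)^(L-1) * u$i))" for j
      by (simp add: sum_distrib_left power_mult_distrib mult_ac)
    define E where "E j = 2*((\<Sum>i\<in>UNIV. A$j$i*(r0 * u$i)^L) - b$j)" for j
    define S where "S j = (\<Sum>i\<in>UNIV. A$j$i * (real L * (u$i)^(L-1) * u$i))" for j
    have "(\<Sum>j\<in>UNIV. E j * (r0^(L-1) * S j)) = r0^(L-1) * (\<Sum>j\<in>UNIV. E j * S j)"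
      by (simp add: sum_distrib_left mult_ac)
    then show ?thesis unfolding inner Gf_def unfolding E_def[symmetric] S_def[symmetric]
      by (simp add: mult_ac)
  qed
  finally show ?thesis .
qed

lemma Gf_bound:
  "\<exists>K0>0. \<forall>s w. \<bar>s\<bar> \<le> R \<longrightarrow> norm w \<le> 1 \<longrightarrow> \<bar>Gf L A b s (w::real^'n)\<bar> \<le> K0"
proof -
  define K where "K = {-R..R} \<times> cball (0::real^'n) 1"
  have "compact K" unfolding K_def by (intro compact_Times compact_Icc compact_cball)
  moreover have "continuous_on K (\<lambda>p. Gf L A b (fst p) (snd p))"
    unfolding Gf_def by (intro continuous_intros)
  ultimately have "compact ((\<lambda>p. Gf L A b (fst p) (snd p)) ` K)"
    by (rule compact_continuous_image[rotated])
  then have "bounded ((\<lambda>p. Gf L A b (fst p) (snd p)) ` K)" by (rule compact_imp_bounded)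
  then obtain K0 where K0: "K0 > 0" "\<forall>y\<in>(\<lambda>p. Gf L A b (fst p) (snd p)) ` K. norm y \<le> K0"
    unfolding bounded_pos by blast
  show ?thesis
  proof (intro exI conjI allI impI)
    fix s :: real and w :: "real^'n" assume "\<bar>s\<bar> \<le> R" "norm w \<le> 1"
    then have "(s, w) \<in> K" unfolding K_def by auto
    then show "\<bar>Gf L A b s w\<bar> \<le> K0" using K0(2) by force
  qed (rule K0(1))
qed

lemma r_nonzero:
  fixes u :: "real \<Rightarrow> real^'n" and A :: "real^'n^'m"
  assumes L: "L \<ge> 2" and eta: "eta > 0"
    and GR: "\<And>t. 0 \<le> t \<Longrightarrow> ((\<lambda>s. lossWN L A b s (u t)) has_real_derivative GR t) (at (r t))"
    and rd: "\<And>t. 0 \<le> t \<Longrightarrow> (r has_real_derivative (- eta * GR t)) (at t within {0..})"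
    and n1: "\<forall>t\<ge>0. norm (u t) = 1" and R: "\<forall>t\<ge>0. \<bar>r t\<bar> \<le> R" and r0: "r 0 > 0"
  shows "\<forall>t\<ge>0. r t \<noteq> 0"
proof -
  obtain K0 where K0: "K0 > 0" "\<And>s w. \<bar>s\<bar> \<le> R \<Longrightarrow> norm w \<le> 1 \<Longrightarrow> \<bar>Gf L A b s (w::real^'n)\<bar> \<le> K0"
    using Gf_bound[of R L A b] by blast
  have R0: "R \<ge> 0" using R by (meson abs_ge_zero order_trans order_refl)
  define Kc where "Kc = 2*eta*K0*R^(L-2)"
  define F where "F t = (r t)^2 * exp (Kc * t)" for t
  have step: "2 * eta * r t * GR t \<le> Kc * (r t)^2" if t: "t \<ge> 0" for t
  proof -
    have g: "GR t = (r t)^(L-1) * Gf L A b (r t) (u t)"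
      using GR_factor[OF n1[rule_format, OF t] GR[OF t]] .
    have rL: "r t * (r t)^(L-1) = (r t)^L" using L by (cases L) auto
    have "r t * GR t = (r t)^L * Gf L A b (r t) (u t)" unfolding g rL[symmetric] by simp
    also have "\<dots> \<le> \<bar>(r t)^L * Gf L A b (r t) (u t)\<bar>" by simp
    also have "\<dots> = \<bar>r t\<bar>^(L-2) * (r t)^2 * \<bar>Gf L A b (r t) (u t)\<bar>"
    proof -
      have "\<bar>r t\<bar>^L = \<bar>r t\<bar>^(L-2) * \<bar>r t\<bar>^2" using L by (metis le_add_diff_inverse2 power_add)
      then show ?thesis by (simp add: abs_mult power_abs)
    qed
    also have "\<dots> \<le> R^(L-2) * (r t)^2 * K0"
    proof -
      have a: "\<bar>r t\<bar>^(L-2) \<le> R^(L-2)" using R t by (intro power_mono) auto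
      have b: "\<bar>Gf L A b (r t) (u t)\<bar> \<le> K0" using R t K0(2)[of "r t" "u t"] n1 by auto
      have c: "\<bar>r t\<bar>^(L-2) * (r t)^2 \<le> R^(L-2) * (r t)^2" using a by (rule mult_right_mono) simp
      show ?thesis by (rule mult_mono[OF c b]) (use R0 in auto)
    qed
    finally have "r t * GR t \<le> R^(L-2) * (r t)^2 * K0" .
    then have "2 * eta * (r t * GR t) \<le> 2 * eta * (R^(L-2) * (r t)^2 * K0)"
      using eta by (intro mult_left_mono) auto
    then show ?thesis unfolding Kc_def by (simp add: mult_ac)
  qed
  show ?thesis
  proof (intro allI impI)
    fix T :: real assume T: "T \<ge> 0"
    have "F 0 \<le> F T"
    proof (rule mono_on[OF _ _ T])
      fix t assume t: "t \<in> {0..T}"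
      show "(F has_real_derivative (2 * r t * (- eta * GR t) * exp (Kc * t) + (r t)^2 * (exp (Kc * t) * Kc))) (at t within {0..})"
        unfolding F_def using rd[of t] t by (auto intro!: derivative_eq_intros)
      have "2 * r t * (- eta * GR t) * exp (Kc * t) + (r t)^2 * (exp (Kc * t) * Kc)
          = exp (Kc * t) * (Kc * (r t)^2 - 2 * eta * r t * GR t)" by (simp add: algebra_simps)
      moreover have "Kc * (r t)^2 - 2 * eta * r t * GR t \<ge> 0" using step[of t] t by auto
      ultimately show "2 * r t * (- eta * GR t) * exp (Kc * t) + (r t)^2 * (exp (Kc * t) * Kc) \<ge> 0"
        by simp
    qed
    then have "(r 0)^2 \<le> (r T)^2 * exp (Kc * T)" unfolding F_def by simp
    moreover have "(r 0)^2 > 0" using r0 by simp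
    ultimately show "r T \<noteq> 0" by auto
  qed
qed




theorem mainTheorem12:
  fixes L :: nat and A :: "real^'n^'m" and b :: "real^'m" and eta :: real
    and x :: "real \<Rightarrow> real^'n" and r :: "real \<Rightarrow> real" and u :: "real \<Rightarrow> real^'n"
  assumes "L \<ge> 2" and "eta > 0"
    and "grad_flow L A b x" and "\<forall>i. x 0 $ i > 0"
    and "wn_flow L A b eta 1 r u"
    and "r 0 > 0" and "\<forall>i. u 0 $ i > 0" and "norm (u 0) = 1"
    and "\<exists>\<rho>. \<rho> \<noteq> 0 \<and> (r \<longlongrightarrow> \<rho>) at_top"
    and "\<exists>v :: real^'n. (\<forall>i. v $ i > 0) \<and> A *v v = 0"
    and "\<exists>C. \<forall>t\<ge>0. \<forall>i. x t $ i \<le> C"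
    and "\<exists>C. \<forall>t\<ge>0. \<forall>i. ((r t / norm (u t)) *\<^sub>R u t) $ i \<le> C"
  shows "\<exists>c>0. \<forall>t\<ge>0. \<forall>i. c \<le> \<bar>x t $ i\<bar> \<and> c \<le> \<bar>((r t / norm (u t)) *\<^sub>R u t) $ i\<bar>"
proof -
  note L = assms(1) and eta = assms(2)
  obtain v :: "real^'n" where vpos: "\<forall>i. v $ i > 0" and Av: "A *v v = 0" using assms(10) by blast
  obtain C where C: "\<forall>t\<ge>0. \<forall>i. x t $ i \<le> C" using assms(11) by blast
  obtain cx where cx: "cx > 0" "\<forall>t\<ge>0. \<forall>i. x t $ i \<ge> cx"
    using x_part[OF L assms(3) assms(4) vpos Av C] by blast
  obtain GR GU where G: "\<And>t. 0 \<le> t \<Longrightarrow>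
        ((\<lambda>s. lossWN L A b s (u t)) has_real_derivative GR t) (at (r t)) \<and>
        ((\<lambda>w. lossWN L A b (r t) w) has_derivative (\<lambda>h. GU t \<bullet> h)) (at (u t)) \<and>
        (r has_real_derivative (- eta * GR t)) (at t within {0..}) \<and>
        (u has_vector_derivative (- GU t)) (at t within {0..})"
    using wn_extract[OF assms(5)] by blast
  have GRd: "\<And>t. 0 \<le> t \<Longrightarrow> ((\<lambda>s. lossWN L A b s (u t)) has_real_derivative GR t) (at (r t))"
    and GUd: "\<And>t. 0 \<le> t \<Longrightarrow> ((\<lambda>w. lossWN L A b (r t) w) has_derivative (\<lambda>h. GU t \<bullet> h)) (at (u t))"
    and rd: "\<And>t. 0 \<le> t \<Longrightarrow> (r has_real_derivative (- eta * GR t)) (at t within {0..})"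
    and ud: "\<And>t. 0 \<le> t \<Longrightarrow> (u has_vector_derivative (- GU t)) (at t within {0..})"
    using G by blast+
  have n1: "\<forall>t\<ge>0. norm (u t) = 1" by (rule u_norm[OF GUd ud assms(8)])
  have rcont: "continuous_on {0..} r"
    unfolding continuous_on_eq_continuous_within
  proof
    fix t :: real assume "t \<in> {0..}"
    then show "continuous (at t within {0..}) r" using rd[of t] DERIV_continuous by auto
  qed
  obtain \<rho> where \<rho>: "\<rho> \<noteq> 0" "(r \<longlongrightarrow> \<rho>) at_top" using assms(9) by blast
  obtain R where R: "\<forall>t\<ge>0. \<bar>r t\<bar> \<le> R" using conv_bounds(1)[OF rcont \<rho>(2)] by blast
  have rnz: "\<forall>t\<ge>0. r t \<noteq> 0" by (rule r_nonzero[OF L eta GRd rd n1 R assms(6)])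
  obtain m where m: "m > 0" "\<forall>t\<ge>0. \<bar>r t\<bar> \<ge> m" using conv_bounds(2)[OF rcont \<rho>(2) rnz \<rho>(1)] by blast
  obtain cu where cu: "cu > 0" "\<forall>t\<ge>0. \<forall>i. u t $ i \<ge> cu"
    using u_lower[OF L eta GRd GUd rd ud n1 assms(7) vpos Av R] by blast
  show ?thesis
  proof (intro exI conjI allI impI)
    show "0 < min cx (m * cu)" using cx m cu by simp
    fix t :: real and i assume t: "0 \<le> t"
    have "cx \<le> x t $ i" using cx(2) t by auto
    then show "min cx (m * cu) \<le> \<bar>x t $ i\<bar>" by (meson abs_ge_self min.coboundedI1 order_trans)
    have up: "u t $ i > 0" using cu t by (meson less_le_trans)
    have e: "\<bar>((r t / norm (u t)) *\<^sub>R u t) $ i\<bar> = \<bar>r t\<bar> * u t $ i"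
      using n1 t up by (simp add: abs_mult)
    have "m * cu \<le> \<bar>r t\<bar> * u t $ i"
      using m cu t by (intro mult_mono) auto
    then show "min cx (m * cu) \<le> \<bar>((r t / norm (u t)) *\<^sub>R u t) $ i\<bar>" unfolding e by linarith
  qed
qed


end
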